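(* For any integers $d\ge2$ and $K\ge2$, $$\left[\frac{\sqrt\pi}{K}\frac{\Gamma(\frac{d+1}{2})}{\Gamma(\frac d2+1)}\right]^{\frac{1}{d-1}}\le\max_{\mathbf W\in\mathrm{OB}(d,K)}\rho_{\text{one-vs-one}}(\mathbf W).$$
   Context: $\mathrm{OB}(d,K)$ is the set of real $d\times K$ matrices with unit-norm columns $\mathbf w_1,\dots,\mathbf w_K$; $\rho_{\text{one-vs-one}}(\mathbf W)=\min_k\min_{k'\ne k}\|\mathbf w_k-\mathbf w_{k'}\|_2$. $\Gamma$ is the Gamma function. *)

theory Defs
  imports "HOL-Analysis.Analysis"
begin

text \<open>A real d x K matrix is represented by its columns: W k is the k-th column
  (k < K), and W k i is its i-th entry (i < d). Entries outside the index range
  are required to be 0, so that OB d K is a set of genuine d x K matrices.\<close>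

definition col_norm :: "nat \<Rightarrow> (nat \<Rightarrow> real) \<Rightarrow> real" where
  "col_norm d v = sqrt (\<Sum>i<d. (v i)\<^sup>2)"

definition OB :: "nat \<Rightarrow> nat \<Rightarrow> (nat \<Rightarrow> nat \<Rightarrow> real) set" where
  "OB d K = {W. (\<forall>k<K. col_norm d (W k) = 1) \<and>
                (\<forall>k i. K \<le> k \<or> d \<le> i \<longrightarrow> W k i = 0)}"

definition rho_ovo :: "nat \<Rightarrow> nat \<Rightarrow> (nat \<Rightarrow> nat \<Rightarrow> real) \<Rightarrow> real" where
  "rho_ovo d K W = Min {col_norm d (\<lambda>i. W k i - W k' i) | k k'. k < K \<and> k' < K \<and> k \<noteq> k'}"

end

theory Submission
  imports Defs
begin

definition cc :: "nat \<Rightarrow> real" where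
  "cc d = sqrt pi * (Gamma ((real d + 1) / 2) / Gamma (real d / 2 + 1))"

lemma gp: "(x::real) > 0 \<Longrightarrow> Gamma (x + 1) = x * Gamma x"
  using Gamma_plus1[of x] nonpos_Ints_nonpos[of x] by force

lemma cc_pos: "cc d > 0"
  unfolding cc_def by (intro mult_pos_pos divide_pos_pos Gamma_real_pos) auto

lemma cc_rec: "cc (d + 2) = cc d * (real d + 1) / (real d + 2)"
proof -
  define A where "A = Gamma ((real d + 1) / 2)"
  define B where "B = Gamma (real d / 2 + 1)"
  have e1: "(real (d+2) + 1) / 2 = (real d + 1) / 2 + 1" by simp
  have e2: "real (d+2) / 2 + 1 = (real d / 2 + 1) + 1" by simp
  have g1: "Gamma ((real (d+2) + 1) / 2) = ((real d + 1)/2) * A"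
    unfolding e1 A_def by (rule gp) simp
  have g2: "Gamma (real (d+2) / 2 + 1) = (real d / 2 + 1) * B"
    unfolding e2 B_def by (rule gp) simp
  have p: "B > 0" unfolding B_def by (intro Gamma_real_pos) auto
  have "cc (d+2) = sqrt pi * (((real d + 1)/2) * A / ((real d / 2 + 1) * B))"
    unfolding cc_def g1 g2 by simp
  also have "\<dots> = sqrt pi * (((real d + 1)/2) * A / (((real d + 2)/2) * B))"
    by (simp add: field_simps)
  also have "\<dots> = sqrt pi * (A / B) * (real d + 1) / (real d + 2)"
    using p by (simp add: field_split_simps)
  finally show ?thesis unfolding cc_def A_def B_def by simp
qed

lemma G32: "Gamma (3/2::real) = sqrt pi / 2"
proof -
  have "Gamma (1/2 + 1::real) = 1/2 * Gamma (1/2)" by (rule gp) simp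
  then show ?thesis by (simp add: Gamma_one_half_real)
qed

lemma G2: "Gamma (2::real) = 1" using gp[of "1::real"] by simp

lemma G52: "Gamma (5/2::real) = 3 * sqrt pi / 4"
proof -
  have "Gamma (3/2 + 1::real) = 3/2 * Gamma (3/2)" by (rule gp) simp
  then show ?thesis using G32 by simp
qed

lemma cc_2: "cc 2 = pi / 2"
proof -
  have e: "(real (2::nat) + 1)/2 = 3/2" "real (2::nat)/2+1 = 2" by simp_all
  have "cc 2 = sqrt pi * (sqrt pi / 2)" unfolding cc_def e G32 G2 by simp
  then show ?thesis by simp
qed

lemma cc_3: "cc 3 = 4 / 3"
proof -
  have "sqrt pi > 0" by simp
  have e: "(real (3::nat) + 1)/2 = 2" "real (3::nat)/2+1 = 5/2" by simp_all
  have "cc 3 = sqrt pi * (1 / (3 * sqrt pi / 4))" unfolding cc_def e G52 G2 by simp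
  then show ?thesis using \<open>sqrt pi > 0\<close> by simp
qed

lemma cc_4: "cc 4 = 3 * pi / 8" using cc_rec[of 2] cc_2 by simp
lemma cc_5: "cc 5 = 16 / 15" using cc_rec[of 3] cc_3 by simp

lemma cc_le: "d \<ge> 2 \<Longrightarrow> cc d \<le> pi / 2 \<and> (d \<ge> 6 \<longrightarrow> cc d \<le> 1)"
proof (induction d rule: less_induct)
  case (less d)
  show ?case
  proof (cases "d \<le> 5")
    case True
    then have "d = 2 \<or> d = 3 \<or> d = 4 \<or> d = 5" using less.prems by auto
    then show ?thesis using cc_2 cc_3 cc_4 cc_5 pi_gt3 by auto
  next
    case False
    define e where "e = d - 2"
    have e: "d = e + 2" "e \<ge> 4" using False unfolding e_def by auto
    then have IH: "cc e \<le> pi / 2 \<and> (e \<ge> 6 \<longrightarrow> cc e \<le> 1)" using less.IH[of e] by auto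
    have r: "cc d = cc e * ((real e + 1) / (real e + 2))" using cc_rec[of e] e by simp
    have f: "(real e + 1) / (real e + 2) \<le> 1" by simp
    have f0: "0 \<le> (real e + 1) / (real e + 2)" by simp
    have pe: "cc e > 0" by (rule cc_pos)
    have ce: "cc e * ((real e + 1) / (real e + 2)) \<le> cc e" using f pe by (intro mult_left_le) auto
    have A: "cc d \<le> pi / 2" using IH r ce by linarith
    have B: "cc d \<le> 1"
    proof (cases "e \<ge> 6")
      case True then show ?thesis using IH r ce by linarith
    next
      case False
      then have "e = 4 \<or> e = 5" using e by auto
      then show ?thesis
      proof
        assume "e = 4" then have "cc d = 3 * pi / 8 * (5/6)" using r cc_4 by simp
        then show ?thesis using pi_approx by simp
      next
        assume "e = 5" then have "cc d = 16/15 * (6/7)" using r cc_5 by simp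
        then show ?thesis by simp
      qed
    qed
    show ?thesis using A B by simp
  qed
qed

lemma PiM_shift:
  assumes I: "finite I"
  shows "distr (PiM I (\<lambda>_. lborel)) (PiM I (\<lambda>_. lborel)) (\<lambda>x. \<lambda>i\<in>I. x i - c i)
         = PiM I (\<lambda>_. lborel :: real measure)"
proof -
  interpret product_sigma_finite "\<lambda>_. lborel :: real measure" by standard
  have meas: "(\<lambda>x. \<lambda>i\<in>I. x i - c i) \<in> measurable (PiM I (\<lambda>_. lborel)) (PiM I (\<lambda>_. lborel :: real measure))"
    by measurable
  show ?thesis
  proof (rule PiM_eqI[OF I])
    show "sets (distr (PiM I (\<lambda>_. lborel)) (PiM I (\<lambda>_. lborel)) (\<lambda>x. \<lambda>i\<in>I. x i - c i)) = sets (PiM I (\<lambda>_. lborel))"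
      by simp
  next
    fix A :: "'a \<Rightarrow> real set"
    assume A: "\<And>i. i \<in> I \<Longrightarrow> A i \<in> sets lborel"
    have pre: "(\<lambda>x. \<lambda>i\<in>I. x i - c i) -` PiE I A \<inter> space (PiM I (\<lambda>_. lborel))
        = PiE I (\<lambda>i. (\<lambda>t. t - c i) -` A i)"
      by (auto simp: space_PiM PiE_iff)
    have one: "emeasure lborel ((\<lambda>t. t - c i) -` A i) = emeasure lborel (A i)" if "i \<in> I" for i
    proof -
      have "emeasure lborel (A i) = emeasure (distr lborel borel ((+) (- c i))) (A i)"
        by (simp add: lborel_distr_plus)
      also have "\<dots> = emeasure lborel ((+) (- c i) -` A i \<inter> space lborel)"
        using A[OF that] by (intro emeasure_distr) auto
      also have "(+) (- c i) -` A i \<inter> space lborel = (\<lambda>t. t - c i) -` A i"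
        by (auto simp: algebra_simps)
      finally show ?thesis by simp
    qed
    have pm: "(\<lambda>t. t - c i) -` A i \<in> sets lborel" if "i \<in> I" for i
    proof -
      have "(\<lambda>t::real. t - c i) \<in> borel_measurable borel" by measurable
      from measurable_sets[OF this A[OF that, simplified]] show ?thesis by simp
    qed
    have "emeasure (distr (PiM I (\<lambda>_. lborel)) (PiM I (\<lambda>_. lborel)) (\<lambda>x. \<lambda>i\<in>I. x i - c i)) (PiE I A)
        = emeasure (PiM I (\<lambda>_. lborel)) (PiE I (\<lambda>i. (\<lambda>t. t - c i) -` A i))"
      using A meas by (subst emeasure_distr) (auto simp: pre intro!: sets_PiM_I_finite I)
    also have "\<dots> = (\<Prod>i\<in>I. emeasure lborel ((\<lambda>t. t - c i) -` A i))"
      using pm by (intro emeasure_PiM I) auto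
    also have "\<dots> = (\<Prod>i\<in>I. emeasure lborel (A i))"
      using one by (intro prod.cong) auto
    finally show "emeasure (distr (PiM I (\<lambda>_. lborel)) (PiM I (\<lambda>_. lborel)) (\<lambda>x. \<lambda>i\<in>I. x i - c i)) (PiE I A)
        = (\<Prod>i\<in>I. emeasure lborel (A i))" .
  qed
qed

lemma ball_sets:
  assumes "finite I"
  shows "{f. sqrt (\<Sum>i\<in>I. (f i - c i)\<^sup>2) \<le> r} \<inter> space (PiM I (\<lambda>_. lborel :: real measure))
     \<in> sets (PiM I (\<lambda>_. lborel))"
proof -
  have "{f \<in> space (PiM I (\<lambda>_. lborel :: real measure)). sqrt (\<Sum>i\<in>I. (f i - c i)\<^sup>2) \<le> r}
     \<in> sets (PiM I (\<lambda>_. lborel))"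
    using assms by measurable
  then show ?thesis by (simp add: Collect_conj_eq Int_commute Collect_mem_eq)
qed

lemma emeasure_ball_shift:
  assumes I: "finite I" and r: "r > 0"
  shows "emeasure (PiM I (\<lambda>_. lborel))
     ({f. sqrt (\<Sum>i\<in>I. (f i - c i)\<^sup>2) \<le> r} \<inter> space (PiM I (\<lambda>_. lborel)))
     = ennreal (unit_ball_vol (real (card I)) * r ^ card I)"
proof -
  let ?M = "PiM I (\<lambda>_. lborel :: real measure)"
  let ?T = "\<lambda>x. \<lambda>i\<in>I. x i - c i"
  have meas: "?T \<in> measurable ?M ?M" by measurable
  have S: "{f. sqrt (\<Sum>i\<in>I. (f i)\<^sup>2) \<le> r} \<inter> space ?M \<in> sets ?M"
    using ball_sets[OF I, of "\<lambda>_. 0" r] by simp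
  have "ennreal (unit_ball_vol (real (card I)) * r ^ card I)
      = emeasure ?M ({f. sqrt (\<Sum>i\<in>I. (f i)\<^sup>2) \<le> r} \<inter> space ?M)"
    using emeasure_cball_aux[OF I r] by simp
  also have "\<dots> = emeasure (distr ?M ?M ?T) ({f. sqrt (\<Sum>i\<in>I. (f i)\<^sup>2) \<le> r} \<inter> space ?M)"
    by (simp add: PiM_shift[OF I])
  also have "\<dots> = emeasure ?M (?T -` ({f. sqrt (\<Sum>i\<in>I. (f i)\<^sup>2) \<le> r} \<inter> space ?M) \<inter> space ?M)"
    using S meas by (intro emeasure_distr) auto
  also have "?T -` ({f. sqrt (\<Sum>i\<in>I. (f i)\<^sup>2) \<le> r} \<inter> space ?M) \<inter> space ?M
      = {f. sqrt (\<Sum>i\<in>I. (f i - c i)\<^sup>2) \<le> r} \<inter> space ?M"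
    by (auto simp: space_PiM PiE_iff)
  finally show ?thesis by simp
qed

lemma pack_step:
  fixes p :: "nat \<Rightarrow> nat \<Rightarrow> real"
  assumes n: "n \<ge> 1" and dp: "\<delta> > 0" and rp: "r > 0" and KK: "real K * \<delta> ^ n \<le> r ^ n" and jK: "j < K"
  shows "\<exists>y. (\<Sum>i<n. (y i)\<^sup>2) \<le> r\<^sup>2 \<and> (\<forall>k<j. \<delta>\<^sup>2 \<le> (\<Sum>i<n. (p k i - y i)\<^sup>2))"
proof (rule ccontr)
  assume H: "\<not> ?thesis"
  let ?M = "PiM {..<n} (\<lambda>_. lborel :: real measure)"
  define B0 where "B0 = {f. sqrt (\<Sum>i\<in>{..<n}. (f i - 0)\<^sup>2) \<le> r} \<inter> space ?M"
  define C where "C k = {f. sqrt (\<Sum>i\<in>{..<n}. (f i - p k i)\<^sup>2) \<le> \<delta>} \<inter> space ?M" for k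
  define v where "v = unit_ball_vol (real n)"
  have vp: "v > 0" unfolding v_def by simp
  have cov: "B0 \<subseteq> (\<Union>k<j. C k)"
  proof
    fix f assume f: "f \<in> B0"
    then have "sqrt (\<Sum>i<n. (f i)\<^sup>2) \<le> r" unfolding B0_def by simp
    moreover have "0 \<le> (\<Sum>i<n. (f i)\<^sup>2)" by (intro sum_nonneg) auto
    ultimately have "(\<Sum>i<n. (f i)\<^sup>2) \<le> r\<^sup>2" using rp real_sqrt_le_iff' by auto
    with H have "\<not> (\<forall>k<j. \<delta>\<^sup>2 \<le> (\<Sum>i<n. (p k i - f i)\<^sup>2))" by blast
    then obtain k where k: "k < j" "(\<Sum>i<n. (p k i - f i)\<^sup>2) < \<delta>\<^sup>2"
      by (auto simp: not_le)
    have "(\<Sum>i<n. (f i - p k i)\<^sup>2) = (\<Sum>i<n. (p k i - f i)\<^sup>2)"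
      by (intro sum.cong) (auto simp: power2_commute)
    with k have "(\<Sum>i<n. (f i - p k i)\<^sup>2) \<le> \<delta>\<^sup>2" by simp
    moreover have "0 \<le> (\<Sum>i<n. (f i - p k i)\<^sup>2)" by (intro sum_nonneg) auto
    ultimately have "sqrt (\<Sum>i<n. (f i - p k i)\<^sup>2) \<le> \<delta>" using dp real_sqrt_le_iff' by auto
    then show "f \<in> (\<Union>k<j. C k)" using f k unfolding C_def B0_def by auto
  qed
  have sB: "B0 \<in> sets ?M" unfolding B0_def by (rule ball_sets) simp
  have sC: "C k \<in> sets ?M" for k unfolding C_def by (rule ball_sets) simp
  have "ennreal (v * r ^ n) = emeasure ?M B0"
    unfolding B0_def v_def using emeasure_ball_shift[of "{..<n}" r "\<lambda>_. 0"] rp by simp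
  also have "\<dots> \<le> emeasure ?M (\<Union>k<j. C k)"
    using cov sC by (intro emeasure_mono) auto
  also have "\<dots> \<le> (\<Sum>k<j. emeasure ?M (C k))"
    using sC by (intro emeasure_subadditive_finite) auto
  also have "\<dots> = (\<Sum>k<j. ennreal (v * \<delta> ^ n))"
    unfolding C_def v_def using emeasure_ball_shift[of "{..<n}" \<delta>] dp by simp
  also have "\<dots> = ennreal (real j * (v * \<delta> ^ n))"
    using vp dp by (simp add: ennreal_of_nat_eq_real_of_nat ennreal_mult)
  finally have le: "v * r ^ n \<le> real j * (v * \<delta> ^ n)"
    using vp dp by (subst (asm) ennreal_le_iff) auto
  have "v * (real K * \<delta> ^ n) \<le> v * r ^ n" using KK vp by simp
  with le have "real K * (v * \<delta> ^ n) \<le> real j * (v * \<delta> ^ n)" by (simp add: algebra_simps)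
  moreover have "v * \<delta> ^ n > 0" using vp dp by simp
  ultimately have "real K \<le> real j" by (rule mult_right_le_imp_le)
  with jK show False by simp
qed

lemma pack:
  assumes n: "n \<ge> 1" and dp: "\<delta> > 0" and rp: "r > 0" and KK: "real K * \<delta> ^ n \<le> r ^ n"
  shows "\<exists>p :: nat \<Rightarrow> nat \<Rightarrow> real. (\<forall>k<K. (\<Sum>i<n. (p k i)\<^sup>2) \<le> r\<^sup>2) \<and>
           (\<forall>k<K. \<forall>k'<K. k \<noteq> k' \<longrightarrow> \<delta>\<^sup>2 \<le> (\<Sum>i<n. (p k i - p k' i)\<^sup>2))"
proof -
  have "\<forall>j\<le>K. \<exists>p :: nat \<Rightarrow> nat \<Rightarrow> real. (\<forall>k<j. (\<Sum>i<n. (p k i)\<^sup>2) \<le> r\<^sup>2) \<and>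
           (\<forall>k<j. \<forall>k'<j. k \<noteq> k' \<longrightarrow> \<delta>\<^sup>2 \<le> (\<Sum>i<n. (p k i - p k' i)\<^sup>2))"
  proof (intro allI impI)
    fix j assume "j \<le> K"
    then show "\<exists>p :: nat \<Rightarrow> nat \<Rightarrow> real. (\<forall>k<j. (\<Sum>i<n. (p k i)\<^sup>2) \<le> r\<^sup>2) \<and>
           (\<forall>k<j. \<forall>k'<j. k \<noteq> k' \<longrightarrow> \<delta>\<^sup>2 \<le> (\<Sum>i<n. (p k i - p k' i)\<^sup>2))"
    proof (induction j)
      case 0 then show ?case by auto
    next
      case (Suc j)
      then obtain p :: "nat \<Rightarrow> nat \<Rightarrow> real" where
        p1: "\<forall>k<j. (\<Sum>i<n. (p k i)\<^sup>2) \<le> r\<^sup>2" and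
        p2: "\<forall>k<j. \<forall>k'<j. k \<noteq> k' \<longrightarrow> \<delta>\<^sup>2 \<le> (\<Sum>i<n. (p k i - p k' i)\<^sup>2)" by auto
      obtain y where y1: "(\<Sum>i<n. (y i)\<^sup>2) \<le> r\<^sup>2" and y2: "\<forall>k<j. \<delta>\<^sup>2 \<le> (\<Sum>i<n. (p k i - y i)\<^sup>2)"
        using pack_step[OF n dp rp KK, of j p] Suc.prems by auto
      define q where "q = p(j := y)"
      have sym: "(\<Sum>i<n. (y i - p k i)\<^sup>2) = (\<Sum>i<n. (p k i - y i)\<^sup>2)" for k
        by (intro sum.cong) (auto simp: power2_commute)
      have "\<forall>k<Suc j. (\<Sum>i<n. (q k i)\<^sup>2) \<le> r\<^sup>2"
        using p1 y1 by (auto simp: q_def less_Suc_eq)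
      moreover have "\<forall>k<Suc j. \<forall>k'<Suc j. k \<noteq> k' \<longrightarrow> \<delta>\<^sup>2 \<le> (\<Sum>i<n. (q k i - q k' i)\<^sup>2)"
        using p2 y2 sym by (auto simp: q_def less_Suc_eq)
      ultimately show ?case by blast
    qed
  qed
  then show ?thesis by auto
qed

lemma rho_set_eq:
  "{col_norm d (\<lambda>i. W k i - W k' i) | k k'. k < K \<and> k' < K \<and> k \<noteq> k'} =
   (\<lambda>(k,k'). col_norm d (\<lambda>i. W k i - W k' i)) ` {(k,k'). k < K \<and> k' < K \<and> k \<noteq> k'}"
  by auto

lemma rho_fin: "finite {(k,k'). k < K \<and> k' < K \<and> k \<noteq> (k'::nat)}"
  by (rule finite_subset[of _ "{..<K} \<times> {..<K}"]) auto

lemma rho_ge: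
  assumes "K \<ge> 2" "\<And>k k'. k < K \<Longrightarrow> k' < K \<Longrightarrow> k \<noteq> k' \<Longrightarrow> t \<le> col_norm d (\<lambda>i. W k i - W k' i)"
  shows "t \<le> rho_ovo d K W"
proof -
  have ne: "(0,1) \<in> {(k,k'). k < K \<and> k' < K \<and> k \<noteq> (k'::nat)}" using assms(1) by auto
  show ?thesis unfolding rho_ovo_def rho_set_eq
    using rho_fin ne assms(2) by (subst Min_ge_iff) auto
qed

lemma rho_le:
  assumes "k < K" "k' < K" "k \<noteq> k'"
  shows "rho_ovo d K W \<le> col_norm d (\<lambda>i. W k i - W k' i)"
  unfolding rho_ovo_def rho_set_eq
  using rho_fin assms by (intro Min_le) auto

lemma sheet:
  fixes p :: "nat \<Rightarrow> nat \<Rightarrow> real" and \<sigma> :: "nat \<Rightarrow> real"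
  assumes K2: "K \<ge> 2" and dp: "\<delta> \<ge> 0" and r1: "r\<^sup>2 \<le> 1"
    and p1: "\<forall>k<K. (\<Sum>i<n. (p k i)\<^sup>2) \<le> r\<^sup>2"
    and sg: "\<forall>k. \<sigma> k = 1 \<or> \<sigma> k = -1"
    and same: "\<forall>k<K. \<forall>k'<K. k \<noteq> k' \<and> \<sigma> k = \<sigma> k' \<longrightarrow> \<delta>\<^sup>2 \<le> (\<Sum>i<n. (p k i - p k' i)\<^sup>2)"
    and diff: "\<forall>k<K. \<forall>k'<K. \<sigma> k \<noteq> \<sigma> k' \<longrightarrow> \<delta>\<^sup>2 \<le> 4 * (1 - r\<^sup>2)"
  defines "W \<equiv> \<lambda>k i. if k < K \<and> i < n then p k i
                    else if k < K \<and> i = n then \<sigma> k * sqrt (1 - (\<Sum>j<n. (p k j)\<^sup>2)) else 0"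
  shows "W \<in> OB (Suc n) K \<and> \<delta> \<le> rho_ovo (Suc n) K W"
proof -
  define s where "s k = sqrt (1 - (\<Sum>j<n. (p k j)\<^sup>2))" for k
  have s2: "(s k)\<^sup>2 = 1 - (\<Sum>j<n. (p k j)\<^sup>2)" if "k < K" for k
    unfolding s_def using p1 that r1 by (intro real_sqrt_pow2) auto
  have sge: "sqrt (1 - r\<^sup>2) \<le> s k" if "k < K" for k
    unfolding s_def using p1 that by auto
  have sg2: "(\<sigma> k)\<^sup>2 = 1" for k using sg[rule_format, of k] by auto
  have Wn: "W k n = \<sigma> k * s k" if "k < K" for k unfolding W_def s_def using that by simp
  have Wi: "W k i = p k i" if "k < K" "i < n" for k i unfolding W_def using that by simp
  have norm: "col_norm (Suc n) (W k) = 1" if k: "k < K" for k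
  proof -
    have "(\<Sum>i<Suc n. (W k i)\<^sup>2) = (\<Sum>i<n. (p k i)\<^sup>2) + (\<sigma> k * s k)\<^sup>2"
      using k by (simp add: Wn Wi)
    also have "\<dots> = 1" using s2[OF k] sg2[of k] by (simp add: power_mult_distrib)
    finally show ?thesis unfolding col_norm_def by simp
  qed
  have OB: "W \<in> OB (Suc n) K"
    unfolding OB_def using norm by (auto simp: W_def)
  have dist: "\<delta> \<le> col_norm (Suc n) (\<lambda>i. W k i - W k' i)" if k: "k < K" "k' < K" "k \<noteq> k'" for k k'
  proof -
    have eq: "(\<Sum>i<Suc n. (W k i - W k' i)\<^sup>2) = (\<Sum>i<n. (p k i - p k' i)\<^sup>2) + (\<sigma> k * s k - \<sigma> k' * s k')\<^sup>2"
      using k by (simp add: Wn Wi)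
    have "\<delta>\<^sup>2 \<le> (\<Sum>i<n. (p k i - p k' i)\<^sup>2) + (\<sigma> k * s k - \<sigma> k' * s k')\<^sup>2"
    proof (cases "\<sigma> k = \<sigma> k'")
      case True
      then have "\<delta>\<^sup>2 \<le> (\<Sum>i<n. (p k i - p k' i)\<^sup>2)" using same k by blast
      moreover have "0 \<le> (\<sigma> k * s k - \<sigma> k' * s k')\<^sup>2" by simp
      ultimately show ?thesis by linarith
    next
      case False
      then have "\<sigma> k' = - \<sigma> k" using sg[rule_format, of k] sg[rule_format, of k'] by auto
      then have "\<sigma> k * s k - \<sigma> k' * s k' = \<sigma> k * (s k + s k')" by (simp add: algebra_simps)
      then have "(\<sigma> k * s k - \<sigma> k' * s k')\<^sup>2 = (s k + s k')\<^sup>2"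
        using sg2[of k] by (simp add: power_mult_distrib)
      also have "\<dots> \<ge> (2 * sqrt (1 - r\<^sup>2))\<^sup>2"
        using sge[OF k(1)] sge[OF k(2)] r1 by (intro power_mono) auto
      also have "(2 * sqrt (1 - r\<^sup>2))\<^sup>2 = 4 * (1 - r\<^sup>2)" using r1 by (simp add: power_mult_distrib)
      finally have "4 * (1 - r\<^sup>2) \<le> (\<sigma> k * s k - \<sigma> k' * s k')\<^sup>2" .
      moreover have "\<delta>\<^sup>2 \<le> 4 * (1 - r\<^sup>2)" using diff k False by auto
      moreover have "0 \<le> (\<Sum>i<n. (p k i - p k' i)\<^sup>2)" by (intro sum_nonneg) auto
      ultimately show ?thesis by linarith
    qed
    then show ?thesis unfolding col_norm_def eq using dp by (intro real_le_rsqrt)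
  qed
  have "\<delta> \<le> rho_ovo (Suc n) K W" by (intro rho_ge[OF K2] dist)
  then show ?thesis using OB by blast
qed

lemma mod2:
  fixes k d :: nat
  assumes "k < 2 * d"
  shows "k = (if k < d then k mod d else k mod d + d)"
proof (cases "k < d")
  case True
  then have "k mod d = k" by simp
  with True show ?thesis by simp
next
  case False
  then have "k mod d = (k - d) mod d" by (simp add: le_mod_geq)
  also have "\<dots> = k - d" using assms False by (intro mod_less) auto
  finally show ?thesis using False by simp
qed

lemma cross:
  assumes K2: "K \<ge> 2" and Kd: "K \<le> 2 * d" and d1: "d \<ge> 1" and dl: "\<delta> \<le> 1"
  shows "\<exists>W \<in> OB d K. \<delta> \<le> rho_ovo d K W"
proof -
  define W where "W k i = (if k < K \<and> i < d \<and> i = k mod d then (if k < d then 1 else -1) else (0::real))" for k i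
  have sq: "(W k i)\<^sup>2 = (if k < K \<and> i < d \<and> i = k mod d then 1 else 0)" for k i
    unfolding W_def by auto
  have norm: "col_norm d (W k) = 1" if "k < K" for k
  proof -
    have "(\<Sum>i<d. (W k i)\<^sup>2) = (\<Sum>i<d. if i = k mod d then 1 else 0)"
      using that by (intro sum.cong) (auto simp: sq)
    also have "\<dots> = 1" using d1 by simp
    finally show ?thesis unfolding col_norm_def by simp
  qed
  have OB: "W \<in> OB d K" unfolding OB_def using norm by (auto simp: W_def)
  have dist: "\<delta> \<le> col_norm d (\<lambda>i. W k i - W k' i)" if k: "k < K" "k' < K" "k \<noteq> k'" for k k'
  proof -
    define a where "a = k mod d"
    have ad: "a < d" unfolding a_def using d1 by simp
    have Wk: "W k a = 1 \<or> W k a = -1" using k ad unfolding W_def a_def by auto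
    have "W k' a \<noteq> W k a"
    proof
      assume e: "W k' a = W k a"
      then have m: "k' mod d = a" using Wk unfolding W_def by (auto split: if_splits)
      have "(k < d) = (k' < d)" using e Wk m k ad unfolding W_def a_def by (auto split: if_splits)
      then have "k = k'" using m mod2[of k d] mod2[of k' d] k Kd unfolding a_def by auto
      with k show False by simp
    qed
    then have "1 \<le> (W k a - W k' a)\<^sup>2" using Wk unfolding W_def
      by (auto split: if_splits simp: power2_eq_square)
    also have "\<dots> \<le> (\<Sum>i<d. (W k i - W k' i)\<^sup>2)"
      using ad by (intro member_le_sum) auto
    finally have "1 \<le> (\<Sum>i<d. (W k i - W k' i)\<^sup>2)" .
    then have "1 \<le> sqrt (\<Sum>i<d. (W k i - W k' i)\<^sup>2)" by (simp add: real_le_rsqrt)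
    then show ?thesis unfolding col_norm_def using dl by linarith
  qed
  have "\<delta> \<le> rho_ovo d K W" by (intro rho_ge[OF K2] dist)
  then show ?thesis using OB by blast
qed

lemma OB_sq: "W \<in> OB d K \<Longrightarrow> k < K \<Longrightarrow> (\<Sum>i<d. (W k i)\<^sup>2) = 1"
  unfolding OB_def col_norm_def by auto

lemma OB_bound: "W \<in> OB d K \<Longrightarrow> k < K \<Longrightarrow> i < d \<Longrightarrow> \<bar>W k i\<bar> \<le> 1"
proof -
  assume a: "W \<in> OB d K" "k < K" "i < d"
  have "(W k i)\<^sup>2 \<le> (\<Sum>j<d. (W k j)\<^sup>2)" using a(3) by (intro member_le_sum) auto
  then have "(W k i)\<^sup>2 \<le> 1" using OB_sq[OF a(1,2)] by simp
  then show ?thesis by (simp add: abs_square_le_1)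
qed

lemma rho_le2:
  assumes W: "W \<in> OB d K" and K2: "K \<ge> 2"
  shows "rho_ovo d K W \<le> 2"
proof -
  have "rho_ovo d K W \<le> col_norm d (\<lambda>i. W 0 i - W 1 i)" using K2 by (intro rho_le) auto
  also have "\<dots> \<le> sqrt (\<Sum>i<d. 2 * (W 0 i)\<^sup>2 + 2 * (W 1 i)\<^sup>2)"
    unfolding col_norm_def
  proof (intro real_sqrt_le_mono sum_mono)
    fix i
    have "0 \<le> (W 0 i + W 1 i)\<^sup>2" by simp
    then show "(W 0 i - W 1 i)\<^sup>2 \<le> 2 * (W 0 i)\<^sup>2 + 2 * (W 1 i)\<^sup>2"
      unfolding power2_diff power2_sum by linarith
  qed
  also have "(\<Sum>i<d. 2 * (W 0 i)\<^sup>2 + 2 * (W 1 i)\<^sup>2) = 2 * (\<Sum>i<d. (W 0 i)\<^sup>2) + 2 * (\<Sum>i<d. (W 1 i)\<^sup>2)"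
    by (simp add: sum.distrib sum_distrib_left)
  also have "\<dots> = 4" using OB_sq[OF W, of 0] OB_sq[OF W, of 1] K2 by simp
  finally show ?thesis by simp
qed

lemma max_exists:
  assumes K2: "K \<ge> 2" and W0: "W0 \<in> OB d K"
  shows "\<exists>L\<in>OB d K. \<forall>W'\<in>OB d K. rho_ovo d K W' \<le> rho_ovo d K L"
proof -
  define S where "S = Sup (rho_ovo d K ` OB d K)"
  have bdd: "bdd_above (rho_ovo d K ` OB d K)"
    using rho_le2[OF _ K2] by (intro bdd_aboveI[of _ 2]) auto
  have upper: "rho_ovo d K W \<le> S" if "W \<in> OB d K" for W
    unfolding S_def using bdd that by (intro cSup_upper) auto
  have ex: "\<exists>W\<in>OB d K. S - 1 / (real m + 1) < rho_ovo d K W" for m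
  proof (rule ccontr)
    assume "\<not> ?thesis"
    then have "\<forall>W\<in>OB d K. rho_ovo d K W \<le> S - 1 / (real m + 1)" by (auto simp: not_less)
    then have "S \<le> S - 1 / (real m + 1)" unfolding S_def using W0
      by (intro cSup_least) auto
    moreover have "1 / (real m + 1) > 0" by simp
    ultimately show False by linarith
  qed
  have "\<forall>m. \<exists>W. W \<in> OB d K \<and> S - 1 / (real m + 1) < rho_ovo d K W" using ex by blast
  from choice[OF this] obtain f where f0: "\<forall>m. f m \<in> OB d K \<and> S - 1 / (real m + 1) < rho_ovo d K (f m)"
    by blast
  have f: "\<And>m. f m \<in> OB d K" "\<And>m. S - 1 / (real m + 1) < rho_ovo d K (f m)" using f0 by auto
  define basis where "basis = {..<K} \<times> {..<d}"
  have "\<forall>\<delta>\<subseteq>basis. \<exists>l::nat \<Rightarrow> nat \<Rightarrow> real. \<exists>r::nat\<Rightarrow>nat.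
    strict_mono r \<and> (\<forall>e>0. eventually (\<lambda>n. \<forall>x\<in>\<delta>. dist ((\<lambda>W (k,i). W k i) (f (r n)) x) ((\<lambda>W (k,i). W k i) l x) < e) sequentially)"
  proof (rule compact_lemma_general[where unproj = "\<lambda>e k i. e (k,i)"])
    show "finite basis" unfolding basis_def by simp
  next
    fix x assume x: "x \<in> basis"
    obtain k i where ki: "x = (k,i)" "k < K" "i < d" using x unfolding basis_def by auto
    show "bounded ((\<lambda>W. (\<lambda>W (k,i). W k i) W x) ` range f)"
      unfolding bounded_iff using OB_bound[OF f(1) ki(2,3)] ki(1) by auto
  next
    fix e :: "nat \<times> nat \<Rightarrow> real" and x assume "x \<in> basis"
    show "(\<lambda>W (k,i). W k i) (\<lambda>k i. e (k,i)) x = e x" by (cases x) auto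
  next
    fix W :: "nat \<Rightarrow> nat \<Rightarrow> real"
    show "(\<lambda>k i. (\<lambda>W (k,i). W k i) W (k,i)) = W" by simp
  qed
  then obtain l :: "nat \<Rightarrow> nat \<Rightarrow> real" and r where r: "strict_mono r"
    and conv: "\<forall>e>0. eventually (\<lambda>n. \<forall>x\<in>basis. dist ((\<lambda>W (k,i). W k i) (f (r n)) x) ((\<lambda>W (k,i). W k i) l x) < e) sequentially"
    by blast
  have lim: "(\<lambda>n. f (r n) k i) \<longlonglongrightarrow> l k i" if "k < K" "i < d" for k i
  proof (rule tendstoI)
    fix e :: real assume "e > 0"
    with conv have "eventually (\<lambda>n. \<forall>x\<in>basis. dist ((\<lambda>W (k,i). W k i) (f (r n)) x) ((\<lambda>W (k,i). W k i) l x) < e) sequentially" by blast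
    then show "eventually (\<lambda>n. dist (f (r n) k i) (l k i) < e) sequentially"
      by (rule eventually_mono) (use that in \<open>auto simp: basis_def\<close>)
  qed
  define L where "L k i = (if k < K \<and> i < d then l k i else 0)" for k i
  have limL: "(\<lambda>n. f (r n) k i) \<longlonglongrightarrow> L k i" if "k < K" "i < d" for k i
    using lim[OF that] that by (simp add: L_def)
  have LOB: "L \<in> OB d K"
    unfolding OB_def
  proof (intro CollectI conjI allI impI)
    fix k assume k: "k < K"
    have "(\<lambda>n. col_norm d (f (r n) k)) \<longlonglongrightarrow> col_norm d (L k)"
      unfolding col_norm_def using k by (intro tendsto_intros limL) auto
    moreover have "(\<lambda>n. col_norm d (f (r n) k)) = (\<lambda>n. 1)"
      using f(1) k unfolding OB_def by auto
    ultimately have "(\<lambda>n. 1::real) \<longlonglongrightarrow> col_norm d (L k)" by simp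
    from LIMSEQ_unique[OF tendsto_const this] show "col_norm d (L k) = 1" by simp
  next
    fix k i assume "K \<le> k \<or> d \<le> i"
    then show "L k i = 0" unfolding L_def by auto
  qed
  have SL: "S \<le> rho_ovo d K L"
  proof (rule rho_ge[OF K2])
    fix k k' assume kk: "k < K" "k' < K" "k \<noteq> k'"
    have t1: "(\<lambda>n. col_norm d (\<lambda>i. f (r n) k i - f (r n) k' i)) \<longlonglongrightarrow> col_norm d (\<lambda>i. L k i - L k' i)"
      unfolding col_norm_def using kk by (intro tendsto_intros limL) auto
    have t2: "(\<lambda>n. S - 1 / (real n + 1)) \<longlonglongrightarrow> S"
      using tendsto_diff[OF tendsto_const[of S] LIMSEQ_inverse_real_of_nat]
      by (simp add: inverse_eq_divide add.commute)
    have le: "S - 1 / (real n + 1) \<le> col_norm d (\<lambda>i. f (r n) k i - f (r n) k' i)" for n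
    proof -
      have "n \<le> r n" using r by (rule seq_suble)
      then have "1 / (real (r n) + 1) \<le> 1 / (real n + 1)" by (intro divide_left_mono) auto
      moreover have "rho_ovo d K (f (r n)) \<le> col_norm d (\<lambda>i. f (r n) k i - f (r n) k' i)"
        using kk by (intro rho_le)
      ultimately show ?thesis using f(2)[of "r n"] by linarith
    qed
    show "S \<le> col_norm d (\<lambda>i. L k i - L k' i)"
      using t2 t1 le by (intro LIMSEQ_le[OF t2 t1]) auto
  qed
  show ?thesis using LOB SL upper by (intro bexI[of _ L]) (auto intro: order_trans)
qed

lemma numC:
  assumes n: "1 \<le> n" "n \<le> 4" and K: "K \<ge> 2 * Suc n + 1" and dp: "\<delta> > 0"
    and dn: "\<delta> ^ n = cc (Suc n) / real K"
  shows "real ((K + 1) div 2) * \<delta> ^ n \<le> (sqrt (1 - \<delta>\<^sup>2 / 4)) ^ n"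
proof -
  define c where "c = cc (Suc n)"
  have Kp: "real K \<ge> 2 * real (Suc n) + 1" using K by linarith
  have Kpos: "real K > 0" using Kp by simp
  have ceq: "c / 2 + c / (2 * real K) = (real K + 1) / 2 * (c / real K)"
    using Kpos by (simp add: field_simps)
  have cp: "c > 0" unfolding c_def by (rule cc_pos)
  have cK: "c / (2 * real K) \<le> c / (2 * (2 * real (Suc n) + 1))"
    using cp Kp by (intro divide_left_mono) auto
  have main: "c / 2 + c / (2 * (2 * real (Suc n) + 1)) \<le> 1 - \<delta>\<^sup>2 / 2 \<and> \<delta>\<^sup>2 \<le> 1"
  proof -
    have "n = 1 \<or> n = 2 \<or> n = 3 \<or> n = 4" using n by auto
    then show ?thesis
    proof (elim disjE)
      assume n1: "n = 1"
      then have c: "c = pi / 2" unfolding c_def using cc_2 by (simp add: numeral_2_eq_2)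
      have "\<delta> = c / real K" using dn n1 unfolding c_def by simp
      also have "\<dots> \<le> c / 5" using Kp n1 cp by (intro divide_left_mono) auto
      finally have "\<delta> \<le> pi / 10" using c by simp
      then have "\<delta>\<^sup>2 \<le> (pi / 10)\<^sup>2" using dp by (intro power_mono) auto
      moreover have "pi / 10 \<le> 0.31416" using pi_approx by simp
      moreover have "(pi / 10)\<^sup>2 \<le> 0.31416\<^sup>2"
        using \<open>pi / 10 \<le> 0.31416\<close> by (intro power_mono) auto
      ultimately have "\<delta>\<^sup>2 \<le> 0.31416\<^sup>2" by linarith
      moreover have "(0.31416::real)\<^sup>2 \<le> 0.0988" by (simp add: power2_eq_square)
      ultimately have "\<delta>\<^sup>2 \<le> 0.0988" by linarith
      then show ?thesis using n1 c pi_approx by simp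
    next
      assume n2: "n = 2"
      then have c: "c = 4 / 3" unfolding c_def using cc_3 by (simp add: numeral_3_eq_3)
      have "\<delta>\<^sup>2 = c / real K" using dn n2 unfolding c_def by simp
      also have "\<dots> \<le> c / 7" using Kp n2 cp by (intro divide_left_mono) auto
      finally show ?thesis using n2 c by simp
    next
      assume n3: "n = 3"
      then have c: "c = 3 * pi / 8" unfolding c_def using cc_4 by (simp add: eval_nat_numeral)
      have "\<delta> ^ 3 = c / real K" using dn n3 unfolding c_def by simp
      also have "\<dots> \<le> c / 9" using Kp n3 cp by (intro divide_left_mono) auto
      finally have "\<delta> ^ 3 \<le> pi / 24" using c by simp
      moreover have "pi / 24 < 0.216" using pi_approx by simp
      moreover have "(0.6::real) ^ 3 = 0.216" by (simp add: eval_nat_numeral)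
      ultimately have "\<delta> ^ 3 < 0.6 ^ 3" by linarith
      then have d6: "\<delta> < 0.6" by (rule power_less_imp_less_base) simp
      have "\<delta>\<^sup>2 \<le> 0.6\<^sup>2" using d6 dp by (intro power_mono) auto
      moreover have "(0.6::real)\<^sup>2 = 0.36" by (simp add: power2_eq_square)
      ultimately have "\<delta>\<^sup>2 \<le> 0.36" by linarith
      then show ?thesis using n3 c pi_approx by simp
    next
      assume n4: "n = 4"
      then have c: "c = 16 / 15" unfolding c_def using cc_5 by (simp add: eval_nat_numeral)
      have "\<delta> ^ 4 = c / real K" using dn n4 unfolding c_def by simp
      also have "\<dots> \<le> c / 11" using Kp n4 cp by (intro divide_left_mono) auto
      finally have "\<delta> ^ 4 \<le> 16 / 165" using c by simp
      moreover have "(0.6::real) ^ 4 = 81 / 625" by (simp add: eval_nat_numeral)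
      ultimately have "\<delta> ^ 4 < 0.6 ^ 4" by linarith
      then have d6: "\<delta> < 0.6" by (rule power_less_imp_less_base) simp
      have "\<delta>\<^sup>2 \<le> 0.6\<^sup>2" using d6 dp by (intro power_mono) auto
      moreover have "(0.6::real)\<^sup>2 = 0.36" by (simp add: power2_eq_square)
      ultimately have "\<delta>\<^sup>2 \<le> 0.36" by linarith
      then show ?thesis using n4 c by simp
    qed
  qed
  define r where "r = sqrt (1 - \<delta>\<^sup>2 / 4)"
  have r0: "0 \<le> r" and r1: "r \<le> 1" using main unfolding r_def by auto
  have r2: "r\<^sup>2 = 1 - \<delta>\<^sup>2 / 4" unfolding r_def using main by simp
  have "0 \<le> (\<delta>\<^sup>2)\<^sup>2 / 16" by simp
  moreover have "(1 - \<delta>\<^sup>2 / 4)\<^sup>2 = 1 - \<delta>\<^sup>2 / 2 + (\<delta>\<^sup>2)\<^sup>2 / 16" by (simp add: power2_eq_square algebra_simps)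
  ultimately have "1 - \<delta>\<^sup>2 / 2 \<le> (1 - \<delta>\<^sup>2 / 4)\<^sup>2" by linarith
  also have "\<dots> = (r\<^sup>2)\<^sup>2" using r2 by simp
  also have "\<dots> = r ^ 4" by (simp flip: power_mult)
  also have "\<dots> \<le> r ^ n" using r0 r1 n by (intro power_decreasing) auto
  finally have rn: "1 - \<delta>\<^sup>2 / 2 \<le> r ^ n" .
  have h2: "2 * ((K + 1) div 2) \<le> K + 1" by presburger
  have "real (2 * ((K + 1) div 2)) \<le> real (K + 1)" using h2 by (simp only: of_nat_le_iff)
  then have "real ((K + 1) div 2) \<le> (real K + 1) / 2" by simp
  then have "real ((K + 1) div 2) * \<delta> ^ n \<le> (real K + 1) / 2 * \<delta> ^ n"
    using dp by (intro mult_right_mono) auto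
  also have "\<dots> = (real K + 1) / 2 * (c / real K)" using dn unfolding c_def by simp
  also have "\<dots> \<le> 1 - \<delta>\<^sup>2 / 2" using ceq cK main by linarith
  finally show ?thesis using rn unfolding r_def by linarith
qed


lemma construct:
  assumes n: "n \<ge> 1" and K2: "K \<ge> 2" and dp: "\<delta> > 0"
    and dn: "\<delta> ^ n = cc (Suc n) / real K"
  shows "\<exists>W\<in>OB (Suc n) K. \<delta> \<le> rho_ovo (Suc n) K W"
proof -
  have cl: "cc (Suc n) \<le> pi / 2 \<and> (Suc n \<ge> 6 \<longrightarrow> cc (Suc n) \<le> 1)" using n by (intro cc_le) auto
  have Kpos: "real K \<ge> 2" using K2 by simp
  have "\<delta> ^ n < 1"
  proof -
    have "cc (Suc n) / real K \<le> (pi / 2) / 2" using cl Kpos cc_pos[of "Suc n"]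
      by (intro frac_le) auto
    moreover have "(pi / 2) / 2 < 1" using pi_less_4 by simp
    ultimately show ?thesis using dn by linarith
  qed
  then have d1: "\<delta> < 1" using one_le_power[of \<delta> n] by linarith
  show ?thesis
  proof (cases "K \<le> 2 * Suc n")
    case True
    then show ?thesis using cross[OF K2 True] d1 by auto
  next
    case False
    then have K: "K \<ge> 2 * Suc n + 1" by simp
    show ?thesis
    proof (cases "Suc n \<ge> 6")
      case True
      have "real K * \<delta> ^ n \<le> 1 ^ n" using dn Kpos cl True by simp
      from pack[OF n dp _ this] obtain p :: "nat \<Rightarrow> nat \<Rightarrow> real" where
        p1: "\<forall>k<K. (\<Sum>i<n. (p k i)\<^sup>2) \<le> 1\<^sup>2" and
        p2: "\<forall>k<K. \<forall>k'<K. k \<noteq> k' \<longrightarrow> \<delta>\<^sup>2 \<le> (\<Sum>i<n. (p k i - p k' i)\<^sup>2)" by auto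
      have sg: "\<forall>k. (\<lambda>_. 1::real) k = 1 \<or> (\<lambda>_. 1::real) k = -1" by simp
      have same: "\<forall>k<K. \<forall>k'<K. k \<noteq> k' \<and> (\<lambda>_. 1::real) k = (\<lambda>_. 1::real) k' \<longrightarrow>
          \<delta>\<^sup>2 \<le> (\<Sum>i<n. (p k i - p k' i)\<^sup>2)" using p2 by simp
      have diff: "\<forall>k<K. \<forall>k'<K. (\<lambda>_. 1::real) k \<noteq> (\<lambda>_. 1::real) k' \<longrightarrow> \<delta>\<^sup>2 \<le> 4 * (1 - 1\<^sup>2)"
        by simp
      have r1: "(1::real)\<^sup>2 \<le> 1" by simp
      from sheet[OF K2 less_imp_le[OF dp] r1 p1 sg same diff] show ?thesis by blast
    next
      case False
      then have n4: "n \<le> 4" by simp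
      define K' where "K' = (K + 1) div 2"
      define r where "r = sqrt (1 - \<delta>\<^sup>2 / 4)"
      have r2: "r\<^sup>2 = 1 - \<delta>\<^sup>2 / 4" unfolding r_def using d1 dp
        using power_le_one[of \<delta> 2] by (intro real_sqrt_pow2) simp
      have rp: "r > 0" unfolding r_def using d1 dp
        using power_le_one[of \<delta> 2] by (intro real_sqrt_gt_zero) simp
      have "real K' * \<delta> ^ n \<le> r ^ n" unfolding K'_def r_def using numC[OF n n4 K dp dn] .
      from pack[OF n dp rp this] obtain p :: "nat \<Rightarrow> nat \<Rightarrow> real" where
        p1: "\<forall>k<K'. (\<Sum>i<n. (p k i)\<^sup>2) \<le> r\<^sup>2" and
        p2: "\<forall>k<K'. \<forall>k'<K'. k \<noteq> k' \<longrightarrow> \<delta>\<^sup>2 \<le> (\<Sum>i<n. (p k i - p k' i)\<^sup>2)" by auto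
      define q where "q k = (if k < K' then p k else p (k - K'))" for k
      define \<sigma> where "\<sigma> k = (if k < K' then 1 else (-1::real))" for k
      have KK': "K \<le> 2 * K'" unfolding K'_def by simp
      have q1: "\<forall>k<K. (\<Sum>i<n. (q k i)\<^sup>2) \<le> r\<^sup>2"
      proof (intro allI impI)
        fix k assume "k < K"
        then show "(\<Sum>i<n. (q k i)\<^sup>2) \<le> r\<^sup>2" using p1 KK' unfolding q_def
          by (cases "k < K'") auto
      qed
      have same: "\<forall>k<K. \<forall>k'<K. k \<noteq> k' \<and> \<sigma> k = \<sigma> k' \<longrightarrow> \<delta>\<^sup>2 \<le> (\<Sum>i<n. (q k i - q k' i)\<^sup>2)"
      proof (intro allI impI)
        fix k k' assume a: "k < K" "k' < K" "k \<noteq> k' \<and> \<sigma> k = \<sigma> k'"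
        show "\<delta>\<^sup>2 \<le> (\<Sum>i<n. (q k i - q k' i)\<^sup>2)"
        proof (cases "k < K'")
          case True
          then have "k' < K'" using a unfolding \<sigma>_def by (auto split: if_splits)
          then show ?thesis using p2 True a unfolding q_def by auto
        next
          case False
          then have "\<not> k' < K'" using a unfolding \<sigma>_def by (auto split: if_splits)
          moreover have "k - K' < K'" "k' - K' < K'" "k - K' \<noteq> k' - K'"
            using a False calculation KK' by auto
          ultimately show ?thesis using p2 False unfolding q_def by auto
        qed
      qed
      have diff: "\<forall>k<K. \<forall>k'<K. \<sigma> k \<noteq> \<sigma> k' \<longrightarrow> \<delta>\<^sup>2 \<le> 4 * (1 - r\<^sup>2)"
        using r2 by simp
      have sg: "\<forall>k. \<sigma> k = 1 \<or> \<sigma> k = -1" unfolding \<sigma>_def by auto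
      have r1: "r\<^sup>2 \<le> 1" using r2 by simp
      from sheet[OF K2 less_imp_le[OF dp] r1 q1 sg same diff] show ?thesis by blast
    qed
  qed
qed

theorem mainTheorem16:
  fixes d K :: nat
  assumes "d \<ge> 2" and "K \<ge> 2"
  shows "\<exists>W\<in>OB d K. (\<forall>W'\<in>OB d K. rho_ovo d K W' \<le> rho_ovo d K W) \<and>
           (sqrt pi / real K * (Gamma ((real d + 1) / 2) / Gamma (real d / 2 + 1)))
              powr (1 / (real d - 1)) \<le> rho_ovo d K W"
proof -
  define n where "n = d - 1"
  have dn: "d = Suc n" and n: "n \<ge> 1" using assms(1) unfolding n_def by auto
  define x where "x = cc d / real K"
  have xp: "x > 0" unfolding x_def using cc_pos[of d] assms(2) by simp
  have eqx: "sqrt pi / real K * (Gamma ((real d + 1) / 2) / Gamma (real d / 2 + 1)) = x"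
    unfolding x_def cc_def by simp
  have rn: "real d - 1 = real n" using dn by simp
  define \<delta> where "\<delta> = x powr (1 / real n)"
  have dp: "\<delta> > 0" unfolding \<delta>_def using xp by simp
  have "\<delta> ^ n = \<delta> powr real n" using dp by (simp add: powr_realpow)
  also have "\<dots> = x" unfolding \<delta>_def using n xp by (simp add: powr_powr)
  finally have dx: "\<delta> ^ n = cc (Suc n) / real K" unfolding x_def dn .
  obtain W0 where W0: "W0 \<in> OB d K" "\<delta> \<le> rho_ovo d K W0"
    using construct[OF n assms(2) dp dx] dn by auto
  obtain L where L: "L \<in> OB d K" "\<forall>W'\<in>OB d K. rho_ovo d K W' \<le> rho_ovo d K L"
    using max_exists[OF assms(2) W0(1)] by blast
  have "\<delta> \<le> rho_ovo d K L" using W0 L by (meson order_trans)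
  then show ?thesis using L eqx rn unfolding \<delta>_def by (intro bexI[of _ L]) auto
qed

end
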